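(* Fix $\alpha\in\mathbb{R}^*\setminus\{\pm1\}$ and let $L=\mathbb{Z}\ltimes\mathbb{R}$ be the Lie group (with $\mathbb{Z}$ discrete) in which $(z,0)(0,r)(-z,0)=(0,\alpha^z r)$ for $z\in\mathbb{Z}$, $r\in\mathbb{R}$. Then $L$ has the topological $R_\infty$-property.
   Context: For an automorphism $\varphi$ of a group $G$, the $\varphi$-twisted conjugacy classes are the equivalence classes of the relation $x\sim_\varphi y$ iff $y=gx\varphi(g)^{-1}$ for some $g\in G$; $R(\varphi)\in\mathbb{N}\cup\{\infty\}$ is the number of these classes. A topological group $G$ has the topological $R_\infty$-property if $R(\varphi)=\infty$ for every automorphism $\varphi$ of $G$ that is a homeomorphism (for a Lie group: every continuous automorphism). *)

theory Defs
  imports "HOL-Analysis.Analysis"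
begin

text \<open>The semidirect product L = Z \<ltimes> R, elements (z, r) :: int \<times> real, with
  (z1,r1)(z2,r2) = (z1+z2, r1 + alpha^z1 r2), so that (z,0)(0,r)(-z,0) = (0, alpha^z r).
  Topology: product topology of int (discrete) and real.\<close>

definition Lmult :: "real \<Rightarrow> int \<times> real \<Rightarrow> int \<times> real \<Rightarrow> int \<times> real" where
  "Lmult \<alpha> p q = (fst p + fst q, snd p + \<alpha> powi (fst p) * snd q)"

definition Linv :: "real \<Rightarrow> int \<times> real \<Rightarrow> int \<times> real" where
  "Linv \<alpha> p = (- fst p, - (\<alpha> powi (- fst p)) * snd p)"

definition L_automorphism :: "real \<Rightarrow> (int \<times> real \<Rightarrow> int \<times> real) \<Rightarrow> bool" where
  "L_automorphism \<alpha> \<phi> \<longleftrightarrow> bij \<phi> \<and> (\<forall>x y. \<phi> (Lmult \<alpha> x y) = Lmult \<alpha> (\<phi> x) (\<phi> y))"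

definition L_homeomorphic_automorphism :: "real \<Rightarrow> (int \<times> real \<Rightarrow> int \<times> real) \<Rightarrow> bool" where
  "L_homeomorphic_automorphism \<alpha> \<phi> \<longleftrightarrow>
     L_automorphism \<alpha> \<phi> \<and> continuous_on UNIV \<phi> \<and> continuous_on UNIV (inv \<phi>)"

definition twisted_rel :: "real \<Rightarrow> (int \<times> real \<Rightarrow> int \<times> real) \<Rightarrow> ((int \<times> real) \<times> (int \<times> real)) set" where
  "twisted_rel \<alpha> \<phi> = {(x, y). \<exists>g. y = Lmult \<alpha> (Lmult \<alpha> g x) (Linv \<alpha> (\<phi> g))}"

definition R_infinite :: "real \<Rightarrow> (int \<times> real \<Rightarrow> int \<times> real) \<Rightarrow> bool" where
  "R_infinite \<alpha> \<phi> \<longleftrightarrow> infinite (UNIV // twisted_rel \<alpha> \<phi>)"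

end

theory Submission
  imports Defs
begin

lemma f_zero:
  fixes f :: "real \<Rightarrow> real" and \<beta> :: real
  assumes cont: "continuous_on UNIV f" and f0: "f 0 = 0"
    and b: "\<bar>\<beta>\<bar> < 1" "\<beta> \<noteq> 0"
    and rel: "\<And>r. f (\<beta> * r) = inverse \<beta> * f r"
  shows "f r = 0"
proof -
  have it: "f r = \<beta> ^ n * f (\<beta> ^ n * r)" for n
  proof (induction n)
    case 0 then show ?case by simp
  next
    case (Suc n)
    have "f (\<beta> ^ Suc n * r) = inverse \<beta> * f (\<beta> ^ n * r)"
      using rel[of "\<beta> ^ n * r"] by (simp add: mult.assoc)
    then show ?case using Suc b(2) by (simp add: field_simps)
  qed
  have p: "(\<lambda>n. \<beta> ^ n) \<longlonglongrightarrow> 0" using b by (intro LIMSEQ_power_zero) simp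
  have "(\<lambda>n. \<beta> ^ n * r) \<longlonglongrightarrow> 0 * r" by (intro tendsto_intros p)
  then have "(\<lambda>n. f (\<beta> ^ n * r)) \<longlonglongrightarrow> f 0"
    using cont by (simp add: continuous_on_tendsto_compose[OF cont])
  then have "(\<lambda>n. \<beta> ^ n * f (\<beta> ^ n * r)) \<longlonglongrightarrow> 0 * f 0"
    by (intro tendsto_intros p)
  then have "(\<lambda>n. f r) \<longlonglongrightarrow> 0" using it by simp
  then show ?thesis by (simp add: LIMSEQ_const_iff)
qed

lemma h_lin:
  fixes h :: "int \<Rightarrow> int"
  assumes add: "\<And>a b. h (a + b) = h a + h b"
  shows "h z = z * h 1"
proof -
  have h0: "h 0 = 0" using add[of 0 0] by simp
  have n: "h (int n) = int n * h 1" for n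
    by (induction n) (simp_all add: h0 add algebra_simps)
  have neg: "h (- a) = - h a" for a using add[of a "-a"] h0 by simp
  show ?thesis
  proof (cases "z \<ge> 0")
    case True then show ?thesis using n[of "nat z"] by simp
  next
    case False then show ?thesis using n[of "nat (-z)"] neg[of "-z"] by simp
  qed
qed

theorem mainTheorem7:
  fixes \<alpha> :: real
  assumes "\<alpha> \<noteq> 0" and "\<alpha> \<noteq> 1" and "\<alpha> \<noteq> -1"
  shows "\<forall>\<phi>. L_homeomorphic_automorphism \<alpha> \<phi> \<longrightarrow> R_infinite \<alpha> \<phi>"
proof (intro allI impI)
  fix \<phi> assume "L_homeomorphic_automorphism \<alpha> \<phi>"
  then have bij: "bij \<phi>" and H: "\<And>x y. \<phi> (Lmult \<alpha> x y) = Lmult \<alpha> (\<phi> x) (\<phi> y)"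
    and cont: "continuous_on UNIV \<phi>"
    unfolding L_homeomorphic_automorphism_def L_automorphism_def by auto
  have e: "\<phi> (0, 0) = (0, 0)"
  proof -
    obtain a b where ab: "\<phi> (0,0) = (a, b)" by force
    have E: "\<phi> (0,0) = Lmult \<alpha> (\<phi> (0,0)) (\<phi> (0,0))"
      using H[of "(0,0)" "(0,0)"] by (simp add: Lmult_def)
    have a0: "a = 0" using arg_cong[OF E, of fst] ab by (simp add: Lmult_def)
    have "b = 0" using arg_cong[OF E, of snd] ab a0 by (simp add: Lmult_def)
    then show ?thesis using ab a0 by simp
  qed
  define g where "g r = real_of_int (fst (\<phi> (0, r)))" for r
  have gc: "continuous_on UNIV g"
  proof -
    have "continuous_on UNIV (\<lambda>r::real. \<phi> (0, r))"
      by (intro continuous_on_compose2[OF cont] continuous_intros) auto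
    then have "continuous_on UNIV (\<lambda>r::real. fst (\<phi> (0, r)))"
      by (intro continuous_intros)
    from continuous_on_compose[OF this Topological_Spaces.continuous_on_discrete[of _ real_of_int]]
    show ?thesis by (simp add: o_def g_def)
  qed
  have "g constant_on UNIV"
  proof (rule continuous_discrete_range_constant[OF connected_UNIV gc])
    fix x :: real
    show "\<exists>e>0. \<forall>y. y \<in> UNIV \<and> g y \<noteq> g x \<longrightarrow> e \<le> norm (g y - g x)"
    proof (intro exI[of _ 1] conjI allI impI)
      fix y assume "y \<in> UNIV \<and> g y \<noteq> g x"
      then have "fst (\<phi> (0, y)) \<noteq> fst (\<phi> (0, x))" unfolding g_def by auto
      then have "1 \<le> \<bar>fst (\<phi> (0, y)) - fst (\<phi> (0, x))\<bar>" by linarith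
      then show "1 \<le> norm (g y - g x)" unfolding g_def
        by (metis of_int_1_le_iff of_int_abs of_int_diff real_norm_def)
    qed simp
  qed
  then obtain c where c: "\<And>r. g r = c" unfolding constant_on_def by blast
  have fst0: "fst (\<phi> (0, r)) = 0" for r
  proof -
    have "g r = g 0" using c by simp
    also have "g 0 = 0" by (simp add: g_def e)
    finally show ?thesis by (simp add: g_def)
  qed
  define h where "h z = fst (\<phi> (z, 0))" for z
  have fsth: "fst (\<phi> (z, r)) = h z" for z r
  proof -
    have "Lmult \<alpha> (z, 0) (0, \<alpha> powi (-z) * r) = (z, r)"
      using assms(1) by (simp add: Lmult_def power_int_minus field_simps)
    then have "\<phi> (z, r) = Lmult \<alpha> (\<phi> (z,0)) (\<phi> (0, \<alpha> powi (-z) * r))" using H by metis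
    then show ?thesis by (simp add: Lmult_def fst0 h_def)
  qed
  have hadd: "h (a + b) = h a + h b" for a b
  proof -
    have "Lmult \<alpha> (a, 0) (b, 0) = (a + b, 0)" by (simp add: Lmult_def)
    then have "\<phi> (a + b, 0) = Lmult \<alpha> (\<phi> (a,0)) (\<phi> (b, 0))" using H by metis
    then show ?thesis by (simp add: Lmult_def h_def)
  qed
  have hl: "h z = z * h 1" for z using h_lin[of h] hadd by blast
  obtain x where x: "\<phi> x = (1, 0)" using bij by (metis bij_pointE)
  have "fst x * h 1 = 1" using fsth[of "fst x" "snd x"] hl[of "fst x"] x by simp
  then have "h 1 = 1 \<or> h 1 = -1" unfolding zmult_eq_1_iff by blast
  then show "R_infinite \<alpha> \<phi>"
  proof
    assume h1: "h 1 = 1"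
    have pres: "fst (\<phi> y) = fst y" for y
      using fsth[of "fst y" "snd y"] hl[of "fst y"] h1 by simp
    have inv: "fst v = fst u" if "(u, v) \<in> twisted_rel \<alpha> \<phi>" for u v
      using that pres unfolding twisted_rel_def by (auto simp: Lmult_def Linv_def)
    define C where "C n = twisted_rel \<alpha> \<phi> `` {(n, 0)}" for n
    have CQ: "C n \<in> UNIV // twisted_rel \<alpha> \<phi>" for n
      unfolding C_def by (rule quotientI) simp
    have mem: "(n, 0) \<in> C n" for n
    proof -
      have "(n, 0) = Lmult \<alpha> (Lmult \<alpha> (0,0) (n,0)) (Linv \<alpha> (\<phi> (0,0)))"
        by (simp add: Lmult_def Linv_def e)
      then show ?thesis unfolding C_def twisted_rel_def by blast
    qed
    have "inj C"
    proof (rule injI)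
      fix n m assume "C n = C m"
      then have "(m, 0) \<in> C n" using mem by simp
      then show "n = m" using inv unfolding C_def by fastforce
    qed
    show ?thesis unfolding R_infinite_def
    proof
      assume "finite (UNIV // twisted_rel \<alpha> \<phi>)"
      then have "finite (range C)" using CQ by (meson finite_subset image_subset_iff)
      then have "finite (UNIV :: int set)" using \<open>inj C\<close> finite_imageD by blast
      then show False by simp
    qed
  next
    assume h1: "h 1 = -1"
    define f where "f r = snd (\<phi> (0, r))" for r
    have phi0: "\<phi> (0, r) = (0, f r)" for r using fst0[of r] f_def by (metis prod.collapse)
    have f0: "f 0 = 0" using e phi0 by simp
    have fc: "continuous_on UNIV f"
    proof -
      have "continuous_on UNIV (\<lambda>r::real. \<phi> (0, r))"
        by (intro continuous_on_compose2[OF cont] continuous_intros) auto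
      then show ?thesis unfolding f_def by (intro continuous_intros)
    qed
    obtain b where b: "\<phi> (1, 0) = (-1, b)" using fsth[of 1 0] h1 by (metis prod.collapse)
    have rel: "f (\<alpha> * r) = inverse \<alpha> * f r" for r
    proof -
      have "Lmult \<alpha> (1,0) (0,r) = Lmult \<alpha> (0, \<alpha> * r) (1, 0)" by (simp add: Lmult_def)
      then have "Lmult \<alpha> (\<phi> (1,0)) (\<phi> (0,r)) = Lmult \<alpha> (\<phi> (0, \<alpha> * r)) (\<phi> (1, 0))"
        using H by metis
      then show ?thesis by (simp add: b phi0 Lmult_def)
    qed
    have fz: "f r = 0" for r
    proof (cases "\<bar>\<alpha>\<bar> < 1")
      case True then show ?thesis using f_zero[OF fc f0 True assms(1) rel] by blast
    next
      case False
      then have "1 < \<bar>\<alpha>\<bar>" using assms(2,3) by linarith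
      then have lt: "\<bar>inverse \<alpha>\<bar> < 1" by (simp add: abs_inverse inverse_less_1_iff)
      have rel2: "f (inverse \<alpha> * r) = inverse (inverse \<alpha>) * f r" for r
        using rel[of "inverse \<alpha> * r"] assms(1) by (simp add: field_simps)
      show ?thesis using f_zero[OF fc f0 lt _ rel2] assms(1) by simp
    qed
    have ph: "\<phi> (0, 1) = \<phi> (0, 0)" using phi0 fz by simp
    have "(0::int, 1::real) = (0, 0)" using bij_is_inj[OF bij] ph by (rule injD)
    then show ?thesis by simp
  qed
qed
end
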